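(* Suppose each $f_i:\mathbb{R}^d\to\mathbb{R}$ is $\mu$-strongly convex and differentiable, with $\mu>0$ and $\lambda>0$. Set $h(x)=\lambda\psi(x)+\frac{\mu}{2n}\|x\|^2$ and $\phi(x)=f(x)-\frac{\mu}{2n}\|x\|^2$ on $\mathbb{R}^{nd}$, and let $L_h=\frac{\lambda+\mu}{n}$ be the smoothness constant of $h$. Then the proximal gradient iteration $$x^{k+1}=\mathrm{prox}_{\frac1{L_h}\phi}\Big(x^k-\tfrac1{L_h}\nabla h(x^k)\Big)$$ satisfies, for every $i$, $$x_i^{k+1}=\mathrm{prox}_{\frac1\lambda f_i}(\bar x^k)=\arg\min_{z\in\mathbb{R}^d}\Big\{f_i(z)+\tfrac\lambda2\|z-\bar x^k\|^2\Big\}.$$ Moreover, this iteration reaches an $\varepsilon$-suboptimal point of $F=h+\phi$ within $\mathcal{O}\big(\frac{\lambda}{\mu}\log\frac1\varepsilon\big)$ iterations.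
   Context: For $x=[x_1,\dots,x_n]\in\mathbb{R}^{nd}$ with $x_i\in\mathbb{R}^d$, define $$f(x)=\frac1n\sum_{i=1}^n f_i(x_i),\qquad \psi(x)=\frac1{2n}\sum_{i=1}^n\|x_i-\bar x\|^2,\qquad \bar x=\frac1n\sum_i x_i,\qquad F=f+\lambda\psi .$$ The proximal operator is $\mathrm{prox}_{\gamma\phi}(v)=\arg\min_x\{\phi(x)+\frac1{2\gamma}\|x-v\|^2\}$. *)

theory Defs
  imports "HOL-Analysis.Analysis"
begin

definition strongly_convex :: "('a::real_normed_vector \<Rightarrow> real) \<Rightarrow> real \<Rightarrow> bool" where
  "strongly_convex g m \<longleftrightarrow>
     (\<forall>x y t. 0 \<le> t \<and> t \<le> 1 \<longrightarrow>
        g ((1 - t) *\<^sub>R x + t *\<^sub>R y)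
          \<le> (1 - t) * g x + t * g y - m / 2 * t * (1 - t) * (norm (x - y))\<^sup>2)"

text \<open>Proximal operator: prox_{gamma phi}(v) = argmin_x phi x + 1/(2 gamma) ||x - v||^2
  (a minimizer chosen by Hilbert choice; unique in all uses below).\<close>
definition prox :: "real \<Rightarrow> ('a::real_normed_vector \<Rightarrow> real) \<Rightarrow> 'a \<Rightarrow> 'a" where
  "prox \<gamma> g v = (SOME x. \<forall>y. g x + 1 / (2 * \<gamma>) * (norm (x - v))\<^sup>2
                              \<le> g y + 1 / (2 * \<gamma>) * (norm (y - v))\<^sup>2)"

definition grad :: "('a::real_inner \<Rightarrow> real) \<Rightarrow> 'a \<Rightarrow> 'a" where
  "grad g x = (SOME v. (g has_derivative (\<lambda>h. v \<bullet> h)) (at x))"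

definition avg :: "('a::real_vector) ^ 'n \<Rightarrow> 'a" where
  "avg x = (1 / real CARD('n)) *\<^sub>R (\<Sum>i\<in>UNIV. x $ i)"

end

theory Submission
  imports Defs
begin


lemma norm_convex_id:
  fixes u v :: "'a::real_inner"
  shows "(norm ((1 - t) *\<^sub>R u + t *\<^sub>R v))\<^sup>2 = (1 - t) * (norm u)\<^sup>2 + t * (norm v)\<^sup>2 - t * (1 - t) * (norm (u - v))\<^sup>2"
  by (simp add: power2_norm_eq_inner inner_diff_left inner_diff_right inner_add_left inner_add_right inner_commute algebra_simps)

lemma sc_tangent:
  fixes g :: "'a::real_normed_vector \<Rightarrow> real"
  assumes sc: "strongly_convex g m" and m: "m \<ge> 0" and D: "(g has_derivative D) (at a)"
  shows "D (z - a) \<le> g z - g a"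
proof -
  let ?u = "z - a"
  have bl: "bounded_linear D" using D by (rule has_derivative_bounded_linear)
  have d0: "((\<lambda>t::real. a + t *\<^sub>R ?u) has_derivative (\<lambda>s. s *\<^sub>R ?u)) (at 0)"
    by (auto intro!: derivative_eq_intros)
  have d1: "((\<lambda>t::real. g (a + t *\<^sub>R ?u)) has_derivative (\<lambda>s. D (s *\<^sub>R ?u))) (at 0)"
    using has_derivative_compose[OF d0, of g D] D by simp
  have eq: "(\<lambda>s. D (s *\<^sub>R ?u)) = (*) (D ?u)"
    using linear_cmul[OF bounded_linear.linear[OF bl]] by (auto simp: fun_eq_iff)
  have "((\<lambda>t::real. g (a + t *\<^sub>R ?u)) has_field_derivative D ?u) (at 0)"
    unfolding has_field_derivative_def using d1 eq by simp
  then have lim: "((\<lambda>t. (g (a + t *\<^sub>R ?u) - g (a + 0 *\<^sub>R ?u)) / (t - 0)) \<longlongrightarrow> D ?u) (at 0)"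
    by (simp add: has_field_derivative_iff)
  then have lim2: "((\<lambda>t. (g (a + t *\<^sub>R ?u) - g a) / t) \<longlongrightarrow> D ?u) (at_right 0)"
    by (simp add: filterlim_at_split)
  have ev: "eventually (\<lambda>t. (g (a + t *\<^sub>R ?u) - g a) / t \<le> g z - g a) (at_right (0::real))"
    unfolding eventually_at_right_field
  proof (intro exI[of _ 1] conjI allI impI)
    fix t :: real assume t: "0 < t" "t < 1"
    have e: "a + t *\<^sub>R ?u = (1 - t) *\<^sub>R a + t *\<^sub>R z" by (simp add: algebra_simps)
    have "g ((1 - t) *\<^sub>R a + t *\<^sub>R z) \<le> (1 - t) * g a + t * g z - m / 2 * t * (1 - t) * (norm (a - z))\<^sup>2"
      using sc t unfolding strongly_convex_def by auto
    also have "\<dots> \<le> (1 - t) * g a + t * g z" using m t by simp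
    finally have "g (a + t *\<^sub>R ?u) - g a \<le> t * (g z - g a)" using e by (simp add: algebra_simps)
    then show "(g (a + t *\<^sub>R ?u) - g a) / t \<le> g z - g a" using t by (simp add: divide_simps mult.commute)
  qed simp
  show ?thesis using tendsto_upperbound[OF lim2 ev] by simp
qed

lemma prox_exists:
  fixes g :: "'a::euclidean_space \<Rightarrow> real"
  assumes sc: "strongly_convex g m" and m: "m \<ge> 0" and dif: "\<And>z. g differentiable (at z)" and c: "c > 0"
  shows "\<exists>p. \<forall>y. g p + c * (norm (p - a))\<^sup>2 \<le> g y + c * (norm (y - a))\<^sup>2"
proof -
  obtain D where D: "(g has_derivative D) (at a)" using dif[of a] unfolding differentiable_def by blast
  have bl: "bounded_linear D" using D by (rule has_derivative_bounded_linear)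
  obtain B where B: "B > 0" "\<And>x. norm (D x) \<le> norm x * B" using bounded_linear.pos_bounded[OF bl] by blast
  define K where "K = (\<lambda>y. g y + c * (norm (y - a))\<^sup>2)"
  have low: "K y > K a" if "norm (y - a) > B / c" for y
  proof -
    have "D (y - a) \<le> g y - g a" by (rule sc_tangent[OF sc m D])
    moreover have "- (norm (y - a) * B) \<le> D (y - a)" using B(2)[of "y - a"] by (simp add: abs_le_iff)
    moreover have "norm (y - a) * B < c * (norm (y - a))\<^sup>2"
    proof -
      have "B < c * norm (y - a)" using that c by (simp add: divide_simps mult.commute)
      then have "norm (y - a) * B < norm (y - a) * (c * norm (y - a))"
        using that B c by (intro mult_strict_left_mono) (auto intro: order.strict_trans1[OF _ that] simp: divide_simps)
      then show ?thesis by (simp add: power2_eq_square algebra_simps)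
    qed
    ultimately show ?thesis unfolding K_def by simp
  qed
  have cont: "continuous_on UNIV g"
    using dif by (intro differentiable_imp_continuous_on) (auto simp: differentiable_on_def intro: differentiable_at_withinI)
  have contK: "continuous_on (cball a (B / c)) K"
    unfolding K_def by (intro continuous_intros continuous_on_subset[OF cont]) auto
  obtain p where p: "p \<in> cball a (B / c)" "\<And>y. y \<in> cball a (B / c) \<Longrightarrow> K p \<le> K y"
    using continuous_attains_inf[OF compact_cball _ contK] B c by (metis centre_in_cball less_eq_real_def divide_pos_pos empty_iff)
  have "K p \<le> K y" for y
  proof (cases "y \<in> cball a (B / c)")
    case True then show ?thesis using p by blast
  next
    case False
    then have "norm (y - a) > B / c" by (simp add: dist_norm norm_minus_commute)
    then have "K y > K a" by (rule low)
    moreover have "K p \<le> K a" using p B c by simp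
    ultimately show ?thesis by simp
  qed
  then show ?thesis unfolding K_def by blast
qed

lemma prox_unique:
  fixes g :: "'a::real_inner \<Rightarrow> real"
  assumes sc: "strongly_convex g m" and m: "m \<ge> 0" and c: "c > 0"
    and p: "\<forall>y. g p + c * (norm (p - a))\<^sup>2 \<le> g y + c * (norm (y - a))\<^sup>2"
    and q: "\<forall>y. g q + c * (norm (q - a))\<^sup>2 \<le> g y + c * (norm (y - a))\<^sup>2"
  shows "p = q"
proof -
  define w where "w = (1 - 1/2) *\<^sub>R p + (1/2::real) *\<^sub>R q"
  have g1: "g w \<le> (1 - 1/2) * g p + (1/2) * g q"
  proof -
    have "g w \<le> (1 - 1/2) * g p + (1/2) * g q - m / 2 * (1/2) * (1 - 1/2) * (norm (p - q))\<^sup>2"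
      unfolding w_def by (rule sc[unfolded strongly_convex_def, rule_format, of "1/2" p q]) simp
    moreover have "0 \<le> m / 2 * (1/2) * (1 - 1/2) * (norm (p - q))\<^sup>2" using m by simp
    ultimately show ?thesis by linarith
  qed
  have hh: "(1/2::real) *\<^sub>R a + (1/2::real) *\<^sub>R a = a" by (simp flip: scaleR_add_left)
  have e: "w - a = (1 - 1/2) *\<^sub>R (p - a) + (1/2::real) *\<^sub>R (q - a)" unfolding w_def using hh by (simp add: algebra_simps)
  have pq: "(p - a) - (q - a) = p - q" by simp
  have n1: "(norm (w - a))\<^sup>2 = (1 - 1/2) * (norm (p - a))\<^sup>2 + (1/2) * (norm (q - a))\<^sup>2 - (1/2) * (1 - 1/2) * (norm (p - q))\<^sup>2"
    unfolding e norm_convex_id pq by (rule refl)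
  have "g p + c * (norm (p - a))\<^sup>2 \<le> g w + c * (norm (w - a))\<^sup>2" using p by blast
  moreover have "g q + c * (norm (q - a))\<^sup>2 \<le> g w + c * (norm (w - a))\<^sup>2" using q by blast
  moreover have "c * (norm (w - a))\<^sup>2 = (c * (norm (p - a))\<^sup>2) / 2 + (c * (norm (q - a))\<^sup>2) / 2 - (c * (norm (p - q))\<^sup>2) / 4"
    unfolding n1 by (simp add: algebra_simps)
  ultimately have "c * (norm (p - q))\<^sup>2 \<le> 0" using g1 by simp
  then have "norm (p - q) = 0" using c by (simp add: mult_le_0_iff)
  then show ?thesis by simp
qed

lemma prox_char:
  fixes g :: "'a::euclidean_space \<Rightarrow> real"
  assumes sc: "strongly_convex g m" and m: "m \<ge> 0" and dif: "\<And>z. g differentiable (at z)" and gam: "\<gamma> > 0"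
  shows "\<forall>y. g (prox \<gamma> g a) + 1 / (2 * \<gamma>) * (norm (prox \<gamma> g a - a))\<^sup>2 \<le> g y + 1 / (2 * \<gamma>) * (norm (y - a))\<^sup>2"
proof -
  have "\<exists>p. \<forall>y. g p + 1 / (2 * \<gamma>) * (norm (p - a))\<^sup>2 \<le> g y + 1 / (2 * \<gamma>) * (norm (y - a))\<^sup>2"
    by (rule prox_exists[OF sc m dif]) (use gam in simp)
  then show ?thesis unfolding prox_def by (rule someI_ex)
qed



lemma card_pos_real: "0 < real CARD('n::finite)" by simp

lemma avg_add: "avg (x + y) = avg x + avg (y :: ('a::real_vector)^'n)"
  by (simp add: avg_def sum.distrib scaleR_add_right)
lemma avg_diff: "avg (x - y) = avg x - avg (y :: ('a::real_vector)^'n)"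
  by (simp add: avg_def sum_subtractf scaleR_diff_right)
lemma avg_scale: "avg (c *\<^sub>R (x :: ('a::real_vector)^'n)) = c *\<^sub>R avg x"
  by (simp add: avg_def scaleR_sum_right[symmetric] mult.commute)
lemma avg_linear: "linear (avg :: ('a::real_vector)^'n \<Rightarrow> 'a)"
  by (rule linearI) (simp_all add: avg_add avg_scale)

lemma sum_avg: "(\<Sum>i\<in>UNIV. x $ i) = real CARD('n) *\<^sub>R avg (x :: ('a::real_vector)^'n::finite)"
  by (simp add: avg_def)

lemma sum_dev_zero: "(\<Sum>i\<in>UNIV. x $ i - avg x) = (0 :: 'a::real_vector)"
  for x :: "('a::real_vector)^'n::finite"
  by (simp add: sum_subtractf sum_avg sum_constant_scaleR)

lemma norm_vec_sq: "(norm (x :: ('a::real_normed_vector)^'n::finite))\<^sup>2 = (\<Sum>i\<in>UNIV. (norm (x $ i))\<^sup>2)"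
  by (simp add: norm_vec_def L2_set_def sum_nonneg)

lemma var_decomp:
  fixes y :: "('a::real_inner)^'n::finite"
  shows "(\<Sum>i\<in>UNIV. (norm (y $ i - a))\<^sup>2) = (\<Sum>i\<in>UNIV. (norm (y $ i - avg y))\<^sup>2) + real CARD('n) * (norm (avg y - a))\<^sup>2"
proof -
  have e: "(norm (y $ i - a))\<^sup>2 = (norm (y $ i - avg y))\<^sup>2 + 2 * ((y $ i - avg y) \<bullet> (avg y - a)) + (norm (avg y - a))\<^sup>2" for i
  proof -
    have "y $ i - a = (y $ i - avg y) + (avg y - a)" by simp
    then have "(norm (y $ i - a))\<^sup>2 = (norm ((y $ i - avg y) + (avg y - a)))\<^sup>2" by metis
    also have "\<dots> = (norm (y $ i - avg y))\<^sup>2 + 2 * ((y $ i - avg y) \<bullet> (avg y - a)) + (norm (avg y - a))\<^sup>2"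
      using dot_norm[of "y $ i - avg y" "avg y - a"] by simp
    finally show ?thesis .
  qed
  have z: "(\<Sum>i\<in>UNIV. (y $ i - avg y) \<bullet> (avg y - a)) = 0"
    using sum_dev_zero[of y] by (simp add: inner_sum_left[symmetric])
  show ?thesis
    unfolding e sum.distrib using z by (simp add: sum_distrib_left[symmetric])
qed

lemma bl_dev: "bounded_linear (\<lambda>x::(real^'d)^'n::finite. x $ i - avg x)"
  by (intro bounded_linear_sub bounded_linear_vec_nth linear_conv_bounded_linear[THEN iffD1] avg_linear)

lemma grad_h:
  fixes x :: "(real^'d)^'n::finite" and lam mu :: real
  shows "grad (\<lambda>x::(real^'d)^'n. lam * ((1 / (2 * real CARD('n))) * (\<Sum>i\<in>UNIV. (norm (x $ i - avg x))\<^sup>2)) + mu / (2 * real CARD('n)) * (norm x)\<^sup>2) x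
     = (\<chi> i. (lam / real CARD('n)) *\<^sub>R (x $ i - avg x) + (mu / real CARD('n)) *\<^sub>R x $ i)"
    (is "grad ?h x = ?g")
proof -
  let ?n = "real CARD('n)"
  have d0: "((\<lambda>x::(real^'d)^'n. (x $ i - avg x) \<bullet> (x $ i - avg x)) has_derivative
      (\<lambda>k. (x $ i - avg x) \<bullet> (k $ i - avg k) + (k $ i - avg k) \<bullet> (x $ i - avg x))) (at x)" for i
    by (rule has_derivative_inner; rule bounded_linear.has_derivative[OF bl_dev]; rule has_derivative_ident)
  have d1: "((\<lambda>x::(real^'d)^'n. (norm (x $ i - avg x))\<^sup>2) has_derivative
      (\<lambda>k. (x $ i - avg x) \<bullet> (k $ i - avg k) + (k $ i - avg k) \<bullet> (x $ i - avg x))) (at x)" for i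
    unfolding power2_norm_eq_inner by (rule d0)
  have d2: "((\<lambda>x::(real^'d)^'n. (norm x)\<^sup>2) has_derivative (\<lambda>k. x \<bullet> k + k \<bullet> x)) (at x)"
    unfolding power2_norm_eq_inner by (rule has_derivative_inner; rule has_derivative_ident)
  have D: "(?h has_derivative (\<lambda>k. lam * ((1 / (2 * ?n)) * (\<Sum>i\<in>UNIV. (x $ i - avg x) \<bullet> (k $ i - avg k) + (k $ i - avg k) \<bullet> (x $ i - avg x)))
       + mu / (2 * ?n) * (x \<bullet> k + k \<bullet> x))) (at x)"
    by (intro has_derivative_add has_derivative_mult_right has_derivative_sum d1 d2)
  have eq: "(\<lambda>k. lam * ((1 / (2 * ?n)) * (\<Sum>i\<in>UNIV. (x $ i - avg x) \<bullet> (k $ i - avg k) + (k $ i - avg k) \<bullet> (x $ i - avg x)))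
       + mu / (2 * ?n) * (x \<bullet> k + k \<bullet> x)) = (\<lambda>k. ?g \<bullet> k)"
  proof
    fix k :: "(real^'d)^'n"
    have s0: "(\<Sum>i\<in>UNIV. (x $ i - avg x) \<bullet> avg k) = 0"
      using sum_dev_zero[of x] by (simp add: inner_sum_left[symmetric])
    have s1: "(\<Sum>i\<in>UNIV. (x $ i - avg x) \<bullet> (k $ i - avg k) + (k $ i - avg k) \<bullet> (x $ i - avg x))
        = 2 * (\<Sum>i\<in>UNIV. (x $ i - avg x) \<bullet> k $ i)"
    proof -
      have t: "(x $ i - avg x) \<bullet> (k $ i - avg k) + (k $ i - avg k) \<bullet> (x $ i - avg x)
          = 2 * ((x $ i - avg x) \<bullet> k $ i) - 2 * ((x $ i - avg x) \<bullet> avg k)" for i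
        by (simp add: inner_diff_right inner_diff_left algebra_simps inner_commute)
      show ?thesis unfolding t sum_subtractf sum_distrib_left[symmetric] s0 by simp
    qed
    have s2: "x \<bullet> k + k \<bullet> x = 2 * (\<Sum>i\<in>UNIV. x $ i \<bullet> k $ i)"
      unfolding inner_commute[of k x] by (simp add: inner_vec_def)
    have s3: "?g \<bullet> k = (lam / ?n) * (\<Sum>i\<in>UNIV. (x $ i - avg x) \<bullet> k $ i) + (mu / ?n) * (\<Sum>i\<in>UNIV. x $ i \<bullet> k $ i)"
    proof -
      have "?g \<bullet> k = (\<Sum>i\<in>UNIV. ?g $ i \<bullet> k $ i)" by (rule inner_vec_def)
      also have "\<dots> = (\<Sum>i\<in>UNIV. (lam / ?n) * ((x $ i - avg x) \<bullet> k $ i) + (mu / ?n) * (x $ i \<bullet> k $ i))"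
        by (simp add: inner_add_left)
      also have "\<dots> = (lam / ?n) * (\<Sum>i\<in>UNIV. (x $ i - avg x) \<bullet> k $ i) + (mu / ?n) * (\<Sum>i\<in>UNIV. x $ i \<bullet> k $ i)"
        by (simp add: sum.distrib sum_distrib_left)
      finally show ?thesis .
    qed
    show "lam * ((1 / (2 * ?n)) * (\<Sum>i\<in>UNIV. (x $ i - avg x) \<bullet> (k $ i - avg k) + (k $ i - avg k) \<bullet> (x $ i - avg x)))
       + mu / (2 * ?n) * (x \<bullet> k + k \<bullet> x) = ?g \<bullet> k"
      unfolding s1 s2 s3 by simp
  qed
  have D': "(?h has_derivative (\<lambda>k. ?g \<bullet> k)) (at x)" using D unfolding eq .
  show ?thesis unfolding grad_def
  proof (rule some_equality)
    fix v assume "(?h has_derivative (\<lambda>k. v \<bullet> k)) (at x)"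
    from has_derivative_unique[OF this D'] have "(\<lambda>k. v \<bullet> k) = (\<lambda>k. ?g \<bullet> k)" .
    then have "v \<bullet> (v - ?g) = ?g \<bullet> (v - ?g)" by metis
    then have "(v - ?g) \<bullet> (v - ?g) = 0" by (simp add: inner_diff_left)
    then show "v = ?g" by simp
  qed (rule D')
qed


lemma norm_sub_scale_sq:
  fixes y a :: "'a::real_inner"
  shows "(norm (y - s *\<^sub>R a))\<^sup>2 = (norm y)\<^sup>2 - 2 * s * (y \<bullet> a) + s\<^sup>2 * (norm a)\<^sup>2"
  unfolding power2_norm_eq_inner by (simp add: inner_diff_left inner_diff_right inner_commute power2_eq_square algebra_simps)

lemma blk_id:
  fixes y a :: "'a::real_inner" and lam mu :: real
  assumes "lam + mu \<noteq> 0"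
  shows "- (mu / 2) * (norm y)\<^sup>2 + (lam + mu) / 2 * (norm (y - (lam / (lam + mu)) *\<^sub>R a))\<^sup>2
       = lam / 2 * (norm (y - a))\<^sup>2 + (lam * (lam / (lam + mu)) - lam) / 2 * (norm a)\<^sup>2"
proof -
  define c where "c = lam / (lam + mu)"
  have hc: "(lam + mu) * c = lam" unfolding c_def using assms by simp
  have e1: "(norm (y - a))\<^sup>2 = (norm y)\<^sup>2 - 2 * (y \<bullet> a) + (norm a)\<^sup>2"
    using norm_sub_scale_sq[of y 1 a] by simp
  have "- (mu / 2) * (norm y)\<^sup>2 + (lam + mu) / 2 * (norm (y - c *\<^sub>R a))\<^sup>2
      = - (mu / 2) * (norm y)\<^sup>2 + (lam + mu) / 2 * (norm y)\<^sup>2 - ((lam + mu) * c) * (y \<bullet> a) + ((lam + mu) * c) * c / 2 * (norm a)\<^sup>2"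
    unfolding norm_sub_scale_sq by (simp add: algebra_simps power2_eq_square)
  also have "\<dots> = lam / 2 * (norm (y - a))\<^sup>2 + (lam * c - lam) / 2 * (norm a)\<^sup>2"
    unfolding hc e1 by (simp add: field_simps)
  finally show ?thesis unfolding c_def .
qed

lemma comb:
  fixes lam mu t X Z Q Vx Vz :: real
  assumes "lam + mu \<noteq> 0" "t = mu / (lam + mu)"
  shows "(1 - t) * X + t * Z - mu / 2 * t * (1 - t) * Q + lam / 2 * ((1 - t) * Vx + t * Vz + t\<^sup>2 * Q)
       = (1 - t) * (X + lam / 2 * Vx) + t * (Z + lam / 2 * Vz)"
proof -
  have k: "lam * t = mu * (1 - t)" using assms by (simp add: field_simps)
  show ?thesis using k by algebra
qed



theorem mainTheorem3:
  fixes f :: "'n::finite \<Rightarrow> real ^ 'd \<Rightarrow> real"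
    and \<mu> lam :: real
    and x0 :: "(real ^ 'd) ^ 'n"
  assumes mu_pos: "\<mu> > 0" and lam_pos: "lam > 0"
    and sc: "\<And>i. strongly_convex (f i) \<mu>"
    and diff: "\<And>i z. f i differentiable (at z)"
  defines "n \<equiv> real CARD('n)"
  defines "ff \<equiv> (\<lambda>x::(real ^ 'd) ^ 'n. (1 / n) * (\<Sum>i\<in>UNIV. f i (x $ i)))"
  defines "\<psi> \<equiv> (\<lambda>x::(real ^ 'd) ^ 'n. (1 / (2 * n)) * (\<Sum>i\<in>UNIV. (norm (x $ i - avg x))\<^sup>2))"
  defines "F \<equiv> (\<lambda>x. ff x + lam * \<psi> x)"
  defines "h \<equiv> (\<lambda>x. lam * \<psi> x + \<mu> / (2 * n) * (norm x)\<^sup>2)"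
  defines "\<phi> \<equiv> (\<lambda>x. ff x - \<mu> / (2 * n) * (norm x)\<^sup>2)"
  defines "Lh \<equiv> (lam + \<mu>) / n"
  defines "xs \<equiv> (\<lambda>k. ((\<lambda>x. prox (1 / Lh) \<phi> (x - (1 / Lh) *\<^sub>R grad h x)) ^^ k) x0)"
  shows "(\<forall>k i. xs (Suc k) $ i = prox (1 / lam) (f i) (avg (xs k))
              \<and> (\<forall>z. f i (xs (Suc k) $ i) + lam / 2 * (norm (xs (Suc k) $ i - avg (xs k)))\<^sup>2
                       \<le> f i z + lam / 2 * (norm (z - avg (xs k)))\<^sup>2))
       \<and> (\<forall>\<epsilon>>0. \<forall>k::nat.
             real k \<ge> (1 + lam / \<mu>) * ln (max 1 ((F x0 - (INF x. F x)) / \<epsilon>))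
             \<longrightarrow> F (xs k) - (INF x. F x) \<le> \<epsilon>)"
proof -
  have npos: "n > 0" unfolding n_def by simp
  have lmpos: "lam + \<mu> > 0" using mu_pos lam_pos by simp
  define t where "t = \<mu> / (lam + \<mu>)"
  have t0: "0 < t" and t1: "t < 1" unfolding t_def using mu_pos lam_pos by (auto simp: field_simps)
  define pm where "pm = (\<lambda>i a. prox (1 / lam) (f i) a)"
  have pmin: "f i (pm i a) + lam / 2 * (norm (pm i a - a))\<^sup>2 \<le> f i z + lam / 2 * (norm (z - a))\<^sup>2" for i a z
  proof -
    have "\<forall>y. f i (prox (1/lam) (f i) a) + 1 / (2 * (1/lam)) * (norm (prox (1/lam) (f i) a - a))\<^sup>2
            \<le> f i y + 1 / (2 * (1/lam)) * (norm (y - a))\<^sup>2"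
      by (rule prox_char[where m = \<mu>]) (use sc diff mu_pos lam_pos in auto)
    then show ?thesis unfolding pm_def by simp
  qed
  have puniq: "p = pm i a" if "\<forall>z. f i p + lam / 2 * (norm (p - a))\<^sup>2 \<le> f i z + lam / 2 * (norm (z - a))\<^sup>2" for i a p
    by (rule prox_unique[OF sc[of i] less_imp_le[OF mu_pos] _ that]) (use lam_pos pmin in auto)

  have hgrad: "grad h x = (\<chi> i. (lam / n) *\<^sub>R (x $ i - avg x) + (\<mu> / n) *\<^sub>R x $ i)" for x
    unfolding h_def \<psi>_def n_def by (rule grad_h)
  have cd: "1 - lam / (lam + \<mu>) - \<mu> / (lam + \<mu>) = 0" using lmpos by (simp add: field_simps)
  have c1: "1 / Lh * (lam / n) = lam / (lam + \<mu>)" unfolding Lh_def using npos lmpos by simp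
  have c2: "1 / Lh * (\<mu> / n) = \<mu> / (lam + \<mu>)" unfolding Lh_def using npos lmpos by simp
  have vcomp: "(x - (1 / Lh) *\<^sub>R grad h x) $ i = (lam / (lam + \<mu>)) *\<^sub>R avg x" for x i
  proof -
    have "(x - (1 / Lh) *\<^sub>R grad h x) $ i = x $ i - (1 / Lh) *\<^sub>R ((lam / n) *\<^sub>R (x $ i - avg x) + (\<mu> / n) *\<^sub>R x $ i)"
      by (simp only: vector_minus_component vector_scaleR_component vec_lambda_beta hgrad)
    also have "\<dots> = x $ i - ((1 / Lh * (lam / n)) *\<^sub>R (x $ i - avg x) + (1 / Lh * (\<mu> / n)) *\<^sub>R x $ i)"
      by (simp only: scaleR_add_right scaleR_scaleR)
    also have "\<dots> = x $ i - ((lam / (lam + \<mu>)) *\<^sub>R (x $ i - avg x) + (\<mu> / (lam + \<mu>)) *\<^sub>R x $ i)"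
      unfolding c1 c2 ..
    also have "\<dots> = (lam / (lam + \<mu>)) *\<^sub>R avg x + (1 - lam / (lam + \<mu>) - \<mu> / (lam + \<mu>)) *\<^sub>R x $ i"
      by (simp add: algebra_simps)
    also have "\<dots> = (lam / (lam + \<mu>)) *\<^sub>R avg x" unfolding cd by simp
    finally show ?thesis .
  qed
  have vform: "x - (1 / Lh) *\<^sub>R grad h x = (\<chi> i. (lam / (lam + \<mu>)) *\<^sub>R avg x)" for x
    using vcomp by (simp add: vec_eq_iff)

  define E where "E = (\<lambda>a::real^'d. (lam * (lam / (lam + \<mu>)) - lam) / 2 * (norm a)\<^sup>2)"
  define K where "K = (\<lambda>i a z. f i z + lam / 2 * (norm (z - a))\<^sup>2)"
  have obj: "\<phi> y + 1 / (2 * (1 / Lh)) * (norm (y - (\<chi> i. (lam / (lam + \<mu>)) *\<^sub>R a)))\<^sup>2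
      = (1 / n) * (\<Sum>i\<in>UNIV. K i a (y $ i)) + E a" for y a
  proof -
    let ?c = "lam / (lam + \<mu>)"
    have "\<phi> y + 1 / (2 * (1 / Lh)) * (norm (y - (\<chi> i. ?c *\<^sub>R a)))\<^sup>2
        = (1 / n) * (\<Sum>i\<in>UNIV. f i (y $ i)) - \<mu> / (2 * n) * (\<Sum>i\<in>UNIV. (norm (y $ i))\<^sup>2)
          + (lam + \<mu>) / (2 * n) * (\<Sum>i\<in>UNIV. (norm (y $ i - ?c *\<^sub>R a))\<^sup>2)"
      unfolding \<phi>_def ff_def Lh_def norm_vec_sq[of y] norm_vec_sq[of "y - _"] by simp
    also have "\<dots> = (1 / n) * (\<Sum>i\<in>UNIV. f i (y $ i) + (- (\<mu> / 2) * (norm (y $ i))\<^sup>2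
          + (lam + \<mu>) / 2 * (norm (y $ i - ?c *\<^sub>R a))\<^sup>2))"
    proof -
      have dist: "(1 / n) * (\<Sum>i\<in>UNIV. f i (y $ i) + (- (\<mu> / 2) * (norm (y $ i))\<^sup>2
          + (lam + \<mu>) / 2 * (norm (y $ i - ?c *\<^sub>R a))\<^sup>2))
          = (1 / n) * ((\<Sum>i\<in>UNIV. f i (y $ i)) + (- (\<mu> / 2)) * (\<Sum>i\<in>UNIV. (norm (y $ i))\<^sup>2)
          + (lam + \<mu>) / 2 * (\<Sum>i\<in>UNIV. (norm (y $ i - ?c *\<^sub>R a))\<^sup>2))"
        by (simp only: sum.distrib sum_distrib_left add.assoc)
      have eq2: "(1 / n) * Sf - \<mu> / (2 * n) * Sy + (lam + \<mu>) / (2 * n) * Sd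
          = (1 / n) * (Sf + (- (\<mu> / 2)) * Sy + (lam + \<mu>) / 2 * Sd)" for Sf Sy Sd
        using npos by (simp add: field_simps)
      show ?thesis unfolding dist by (rule eq2)
    qed
    also have "\<dots> = (1 / n) * (\<Sum>i\<in>UNIV. K i a (y $ i) + E a)"
      unfolding blk_id[OF lmpos[THEN less_imp_neq, symmetric]] K_def E_def by (simp add: algebra_simps)
    also have "\<dots> = (1 / n) * (\<Sum>i\<in>UNIV. K i a (y $ i)) + E a"
      using npos unfolding sum.distrib n_def by (simp add: field_simps)
    finally show ?thesis .
  qed
  have proxphi: "prox (1 / Lh) \<phi> (\<chi> i. (lam / (lam + \<mu>)) *\<^sub>R a) = (\<chi> i. pm i a)" for a
    unfolding prox_def
  proof (rule some_equality)
    have "(1 / n) * (\<Sum>i\<in>UNIV. K i a ((\<chi> i. pm i a) $ i)) \<le> (1 / n) * (\<Sum>i\<in>UNIV. K i a (y $ i))" for y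
      using npos pmin by (intro mult_left_mono sum_mono) (auto simp: K_def)
    then show "\<forall>y. \<phi> (\<chi> i. pm i a) + 1 / (2 * (1 / Lh)) * (norm ((\<chi> i. pm i a) - (\<chi> i. (lam / (lam + \<mu>)) *\<^sub>R a)))\<^sup>2
        \<le> \<phi> y + 1 / (2 * (1 / Lh)) * (norm (y - (\<chi> i. (lam / (lam + \<mu>)) *\<^sub>R a)))\<^sup>2"
      unfolding obj by simp
  next
    fix x assume "\<forall>y. \<phi> x + 1 / (2 * (1 / Lh)) * (norm (x - (\<chi> i. (lam / (lam + \<mu>)) *\<^sub>R a)))\<^sup>2
        \<le> \<phi> y + 1 / (2 * (1 / Lh)) * (norm (y - (\<chi> i. (lam / (lam + \<mu>)) *\<^sub>R a)))\<^sup>2"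
    then have "(1 / n) * (\<Sum>i\<in>UNIV. K i a (x $ i)) \<le> (1 / n) * (\<Sum>i\<in>UNIV. K i a ((\<chi> i. pm i a) $ i))"
      unfolding obj by (metis add_le_cancel_right)
    then have le: "(\<Sum>i\<in>UNIV. K i a (x $ i)) \<le> (\<Sum>i\<in>UNIV. K i a (pm i a))"
      using npos by (simp add: divide_le_cancel)
    have ge: "K i a (pm i a) \<le> K i a (x $ i)" for i using pmin unfolding K_def by blast
    have eqi: "K i a (x $ i) = K i a (pm i a)" for i
    proof (rule ccontr)
      assume "K i a (x $ i) \<noteq> K i a (pm i a)"
      then have "K i a (pm i a) < K i a (x $ i)" using ge[of i] by simp
      then have "(\<Sum>i\<in>UNIV. K i a (pm i a)) < (\<Sum>i\<in>UNIV. K i a (x $ i))"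
        using ge by (intro sum_strict_mono_ex1) auto
      then show False using le by simp
    qed
    have "x $ i = pm i a" for i
    proof (rule puniq, rule allI)
      fix z show "f i (x $ i) + lam / 2 * (norm (x $ i - a))\<^sup>2 \<le> f i z + lam / 2 * (norm (z - a))\<^sup>2"
        using eqi[of i] pmin[of i a z] unfolding K_def by simp
    qed
    then show "x = (\<chi> i. pm i a)" by (simp add: vec_eq_iff)
  qed
  define T where "T = (\<lambda>x::(real^'d)^'n. (\<chi> i. pm i (avg x)))"
  have xsS: "xs (Suc k) = T (xs k)" for k
    unfolding xs_def T_def by (simp add: vform proxphi)
  have xs0: "xs 0 = x0" unfolding xs_def by simp

  have part1: "\<forall>k i. xs (Suc k) $ i = prox (1 / lam) (f i) (avg (xs k))
              \<and> (\<forall>z. f i (xs (Suc k) $ i) + lam / 2 * (norm (xs (Suc k) $ i - avg (xs k)))\<^sup>2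
                       \<le> f i z + lam / 2 * (norm (z - avg (xs k)))\<^sup>2)"
    using pmin unfolding xsS T_def pm_def by simp


  define S where "S = (\<lambda>y::(real^'d)^'n. (\<Sum>i\<in>UNIV. f i (y $ i)) + lam / 2 * (\<Sum>i\<in>UNIV. (norm (y $ i - avg y))\<^sup>2))"
  have FS: "F y = S y / n" for y
    unfolding F_def ff_def \<psi>_def S_def using npos by (simp add: field_simps)
  have descS: "S (T x) \<le> (1 - t) * S x + t * S z" for x z
  proof -
    let ?a = "avg x"
    let ?y = "T x"
    define w where "w = (1 - t) *\<^sub>R x + t *\<^sub>R z"
    define Q where "Q = (\<Sum>i\<in>UNIV. (norm (x $ i - z $ i))\<^sup>2)"
    define X where "X = (\<Sum>i\<in>UNIV. f i (x $ i))"
    define Z where "Z = (\<Sum>i\<in>UNIV. f i (z $ i))"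
    define Vx where "Vx = (\<Sum>i\<in>UNIV. (norm (x $ i - avg x))\<^sup>2)"
    define Vz where "Vz = (\<Sum>i\<in>UNIV. (norm (z $ i - avg z))\<^sup>2)"
    define Fw where "Fw = (\<Sum>i\<in>UNIV. f i (w $ i))"
    define Vw where "Vw = (\<Sum>i\<in>UNIV. (norm (w $ i - avg w))\<^sup>2)"
    define M where "M = n * (norm (avg w - ?a))\<^sup>2"
    have ya: "?y $ i = pm i ?a" for i unfolding T_def by simp
    have s1: "S ?y \<le> (\<Sum>i\<in>UNIV. f i (?y $ i) + lam / 2 * (norm (?y $ i - ?a))\<^sup>2)"
    proof -
      have "(\<Sum>i\<in>UNIV. (norm (?y $ i - avg ?y))\<^sup>2) \<le> (\<Sum>i\<in>UNIV. (norm (?y $ i - ?a))\<^sup>2)"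
        unfolding var_decomp[of ?y ?a] by simp
      then show ?thesis unfolding S_def sum.distrib sum_distrib_left[symmetric] using lam_pos by simp
    qed
    have s2: "(\<Sum>i\<in>UNIV. f i (?y $ i) + lam / 2 * (norm (?y $ i - ?a))\<^sup>2)
        \<le> (\<Sum>i\<in>UNIV. f i (w $ i) + lam / 2 * (norm (w $ i - ?a))\<^sup>2)"
      unfolding ya by (intro sum_mono pmin)
    have s3: "(\<Sum>i\<in>UNIV. f i (w $ i) + lam / 2 * (norm (w $ i - ?a))\<^sup>2) = Fw + lam / 2 * (Vw + M)"
      unfolding sum.distrib sum_distrib_left[symmetric] var_decomp[of w ?a] Fw_def Vw_def M_def n_def ..
    have s4: "Fw \<le> (1 - t) * X + t * Z - \<mu> / 2 * t * (1 - t) * Q"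
    proof -
      have fi: "f i (w $ i) \<le> (1 - t) * f i (x $ i) + t * f i (z $ i) - \<mu> / 2 * t * (1 - t) * (norm (x $ i - z $ i))\<^sup>2" for i
        using sc[of i, unfolded strongly_convex_def, rule_format, of t "x $ i" "z $ i"] t0 t1 unfolding w_def by simp
      have "Fw \<le> (\<Sum>i\<in>UNIV. (1 - t) * f i (x $ i) + t * f i (z $ i) - \<mu> / 2 * t * (1 - t) * (norm (x $ i - z $ i))\<^sup>2)"
        unfolding Fw_def by (intro sum_mono fi)
      also have "\<dots> = (1 - t) * X + t * Z - \<mu> / 2 * t * (1 - t) * Q"
        unfolding X_def Z_def Q_def by (simp add: sum.distrib sum_subtractf sum_distrib_left)
      finally show ?thesis .
    qed
    have s5: "Vw \<le> (1 - t) * Vx + t * Vz"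
    proof -
      have wi: "w $ i - avg w = (1 - t) *\<^sub>R (x $ i - avg x) + t *\<^sub>R (z $ i - avg z)" for i
        unfolding w_def avg_add avg_scale by (simp add: algebra_simps)
      have "(norm (w $ i - avg w))\<^sup>2 \<le> (1 - t) * (norm (x $ i - avg x))\<^sup>2 + t * (norm (z $ i - avg z))\<^sup>2" for i
        unfolding wi norm_convex_id using t0 t1 by simp
      then have "Vw \<le> (\<Sum>i\<in>UNIV. (1 - t) * (norm (x $ i - avg x))\<^sup>2 + t * (norm (z $ i - avg z))\<^sup>2)"
        unfolding Vw_def by (intro sum_mono)
      also have "\<dots> = (1 - t) * Vx + t * Vz" unfolding Vx_def Vz_def by (simp add: sum.distrib sum_distrib_left)
      finally show ?thesis .
    qed
    have s6: "M \<le> t\<^sup>2 * Q"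
    proof -
      have aw: "avg w - ?a = t *\<^sub>R (avg z - avg x)" unfolding w_def avg_add avg_scale by (simp add: algebra_simps)
      have "(\<Sum>i\<in>UNIV. (norm ((z - x) $ i - 0))\<^sup>2) = (\<Sum>i\<in>UNIV. (norm ((z - x) $ i - avg (z - x)))\<^sup>2) + n * (norm (avg (z - x) - 0))\<^sup>2"
        unfolding n_def by (rule var_decomp)
      moreover have "(\<Sum>i\<in>UNIV. (norm ((z - x) $ i - 0))\<^sup>2) = Q"
        unfolding Q_def by (simp add: norm_minus_commute)
      moreover have nn: "0 \<le> (\<Sum>i\<in>UNIV. (norm ((z - x) $ i - avg (z - x)))\<^sup>2)" by (intro sum_nonneg) auto
      ultimately have "n * (norm (avg (z - x) - 0))\<^sup>2 \<le> Q" by linarith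
      then have "n * (norm (avg z - avg x))\<^sup>2 \<le> Q" unfolding avg_diff by simp
      then have "t\<^sup>2 * (n * (norm (avg z - avg x))\<^sup>2) \<le> t\<^sup>2 * Q" by (intro mult_left_mono) auto
      moreover have nsq: "(norm (t *\<^sub>R (avg z - avg x)))\<^sup>2 = t\<^sup>2 * (norm (avg z - avg x))\<^sup>2"
        by (simp add: power_mult_distrib)
      ultimately show ?thesis unfolding M_def aw nsq by (simp add: ac_simps)
    qed
    have "S ?y \<le> Fw + lam / 2 * (Vw + M)" using s1 s2 s3 by linarith
    also have "\<dots> \<le> ((1 - t) * X + t * Z - \<mu> / 2 * t * (1 - t) * Q) + lam / 2 * ((1 - t) * Vx + t * Vz + t\<^sup>2 * Q)"
    proof -
      have "lam / 2 * (Vw + M) \<le> lam / 2 * ((1 - t) * Vx + t * Vz + t\<^sup>2 * Q)"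
        using s5 s6 lam_pos by (intro mult_left_mono) auto
      then show ?thesis using s4 by linarith
    qed
    also have "\<dots> = (1 - t) * (X + lam / 2 * Vx) + t * (Z + lam / 2 * Vz)"
      by (rule comb) (use lmpos t_def in auto)
    also have "\<dots> = (1 - t) * S x + t * S z" unfolding S_def X_def Z_def Vx_def Vz_def ..
    finally show ?thesis .
  qed
  have descF: "F (T x) \<le> (1 - t) * F x + t * F z" for x z
  proof -
    have "S (T x) / n \<le> ((1 - t) * S x + t * S z) / n" using descS[of x z] npos by (intro divide_right_mono) auto
    then show ?thesis unfolding FS by (simp add: add_divide_distrib)
  qed
  define Fs where "Fs = (INF x. F x)"
  have descI: "F (T x) - Fs \<le> (1 - t) * (F x - Fs)" for x
  proof -
    have "(F (T x) - (1 - t) * F x) / t \<le> F z" for z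
      using descF[of x z] t0 by (simp add: pos_divide_le_eq algebra_simps)
    then have "(F (T x) - (1 - t) * F x) / t \<le> Fs" unfolding Fs_def by (intro cINF_greatest) auto
    then have "F (T x) - (1 - t) * F x \<le> t * Fs" using t0 by (simp add: pos_divide_le_eq mult.commute)
    then show ?thesis by (simp add: algebra_simps)
  qed
  have rate: "F (xs k) - Fs \<le> (1 - t) ^ k * (F x0 - Fs)" for k
  proof (induction k)
    case 0 show ?case by (simp add: xs0)
  next
    case (Suc k)
    have "F (xs (Suc k)) - Fs \<le> (1 - t) * (F (xs k) - Fs)" unfolding xsS by (rule descI)
    also have "\<dots> \<le> (1 - t) * ((1 - t) ^ k * (F x0 - Fs))" using Suc t1 by (intro mult_left_mono) auto
    finally show ?case by simp
  qed
  have part2: "\<forall>\<epsilon>>0. \<forall>k::nat. real k \<ge> (1 + lam / \<mu>) * ln (max 1 ((F x0 - Fs) / \<epsilon>)) \<longrightarrow> F (xs k) - Fs \<le> \<epsilon>"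
  proof (intro allI impI)
    fix \<epsilon> :: real and k :: nat
    assume eps: "\<epsilon> > 0" and kge: "real k \<ge> (1 + lam / \<mu>) * ln (max 1 ((F x0 - Fs) / \<epsilon>))"
    define D where "D = F x0 - Fs"
    define q where "q = 1 - t"
    have q0: "0 < q" and q1: "q < 1" unfolding q_def using t0 t1 by auto
    show "F (xs k) - Fs \<le> \<epsilon>"
    proof (cases "D \<le> 0")
      case True
      have "(1 - t) ^ k * D \<le> 0" using True q0 unfolding q_def by (simp add: mult_nonneg_nonpos)
      then show ?thesis using rate[of k] eps unfolding D_def by linarith
    next
      case False
      define R where "R = max 1 (D / \<epsilon>)"
      have R1: "R \<ge> 1" unfolding R_def by simp
      have "D / \<epsilon> \<le> R" unfolding R_def by simp
      then have RD: "D \<le> \<epsilon> * R" using eps by (simp add: pos_divide_le_eq mult.commute)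
      have it: "1 + lam / \<mu> = 1 / t" unfolding t_def using mu_pos lam_pos by (simp add: field_simps)
      have "(1 / t) * ln R \<le> real k" using kge unfolding it R_def D_def .
      then have lnR: "ln R \<le> t * real k" using t0 by (simp add: field_simps)
      have lnq: "ln q \<le> - t" using ln_le_minus_one[OF q0] unfolding q_def by simp
      have "ln (q ^ k) = real k * ln q" using q0 by (simp add: ln_realpow)
      also have "\<dots> \<le> real k * (- t)" using lnq by (intro mult_left_mono) auto
      also have "\<dots> \<le> - ln R" using lnR by (simp add: mult.commute)
      also have "\<dots> = ln (1 / R)" using R1 by (simp add: ln_div)
      finally have "ln (q ^ k) \<le> ln (1 / R)" .
      then have qk: "q ^ k \<le> 1 / R" using q0 R1 by (subst (asm) ln_le_cancel_iff) auto
      have "q ^ k * D \<le> (1 / R) * D" using qk False by (intro mult_right_mono) auto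
      also have "\<dots> \<le> \<epsilon>" using RD R1 by (simp add: pos_divide_le_eq)
      finally show ?thesis using rate[of k] unfolding D_def q_def by linarith
    qed
  qed
  show ?thesis using part1 part2 unfolding Fs_def by blast
qed

end
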